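(* Let $q$ be a self-join-free Boolean conjunctive query such that $q$ is saturated and the attack graph of $q$ contains no strong cycle. Let $\mathcal{S}$ be an initial strong component in the attack graph of $q$ with $|\mathcal{S}|\ge 2$. Then the M-graph of $q$ contains a cycle all of whose atoms belong to $\mathcal{S}$.
   Context: Every relation name has a signature $[n,k]$ ($1\le k\le n$; primary-key positions $1,\dots,k$) and a mode in $\{\mathsf{c},\mathsf{i}\}$. For an atom $F$, $\mathrm{key}(F)$ = variables at primary-key positions, $\mathrm{vars}(F)$ = all its variables. A self-join-free Boolean conjunctive query is a finite set of atoms with distinct relation names. $\mathcal{K}(p)=\{\mathrm{key}(F)\to\mathrm{vars}(F)\mid F\in p\}$ (FDs over variables); $q^{\mathsf{c}}$ = atoms of $q$ of mode $\mathsf{c}$; $F^{+,q}$ = variables $x$ with $\mathcal{K}(q\setminus\{F\})\cup\mathcal{K}(q^{\mathsf{c}})\models\mathrm{key}(F)\to x$. Attack graph: vertices atoms of $q$, edge $F\to G$ ($F\ne G$) iff there are atoms $F_0=F,\dots,F_\ell=G$ of $q$ and variables $x_i\in(\mathrm{vars}(F_{i-1})\cap\mathrm{vars}(F_i))\setminus F^{+,q}$. Attack weak if $\mathcal{K}(q)\models\mathrm{key}(F)\to\mathrm{key}(G)$, else strong; cycle strong if it contains a strong attack. A strong component is initial if no edge enters it from another strong component. $F$ attacks a variable $x$ if $F$ attacks $N(x)$ in $q\cup\{N(x)\}$ ($N$ fresh, signature $[1,1]$). A sequential proof for $\mathcal{K}(q)\models Z\to w$: atoms $F_1,\dots,F_\ell$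 of $q$ with $\mathrm{key}(F_i)\subseteq Z\cup\bigcup_{j<i}\mathrm{vars}(F_j)$ and $w\in\mathrm{vars}(F_k)$ for some $k$. $Z\to w$ is internal to $q$ if some such proof has no atom attacking a variable in $Z\cup\{w\}$, and $Z\subseteq\mathrm{vars}(F)$ for some $F\in q$. $q$ is saturated if $\mathcal{K}(q^{\mathsf{c}})\models\sigma$ for every $\sigma$ internal to $q$. The M-graph of $q$ has the atoms of $q$ as vertices and an edge $F\to G$ ($F\ne G$) iff $\mathcal{K}(q^{\mathsf{c}})\models\mathrm{vars}(F)\to\mathrm{key}(G)$. *)

theory Defs
  imports Main "HOL-Library.Infinite_Typeclass"
begin

datatype ('v, 'c) trm = Var 'v | Cst 'c

datatype mode = ModeC | ModeI

text \<open>An atom records its relation name, the number k of primary-key positions of the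
  relation's signature [n,k] (n is the length of the argument list), its argument list,
  and the mode of its relation name.\<close>
datatype ('r, 'v, 'c) atom =
  Atom (rel: 'r) (keylen: nat) (args: "('v, 'c) trm list") (amode: mode)

definition wf_atom :: "('r, 'v, 'c) atom \<Rightarrow> bool" where
  "wf_atom F \<longleftrightarrow> 1 \<le> keylen F \<and> keylen F \<le> length (args F)"

definition key :: "('r, 'v, 'c) atom \<Rightarrow> 'v set" where
  "key F = {x. Var x \<in> set (take (keylen F) (args F))}"

definition vars :: "('r, 'v, 'c) atom \<Rightarrow> 'v set" where
  "vars F = {x. Var x \<in> set (args F)}"

definition sjf_query :: "('r, 'v, 'c) atom set \<Rightarrow> bool" where
  "sjf_query q \<longleftrightarrow> finite q \<and> (\<forall>F\<in>q. wf_atom F) \<and> inj_on rel q"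

definition qc :: "('r, 'v, 'c) atom set \<Rightarrow> ('r, 'v, 'c) atom set" where
  "qc q = {F \<in> q. amode F = ModeC}"

type_synonym 'v fd = "'v set \<times> 'v set"

definition K :: "('r, 'v, 'c) atom set \<Rightarrow> 'v fd set" where
  "K p = (\<lambda>F. (key F, vars F)) ` p"

inductive_set fd_closure :: "'v fd set \<Rightarrow> 'v set \<Rightarrow> 'v set" for \<Sigma> X where
  base: "x \<in> X \<Longrightarrow> x \<in> fd_closure \<Sigma> X"
| step: "(A, B) \<in> \<Sigma> \<Longrightarrow> \<forall>a\<in>A. a \<in> fd_closure \<Sigma> X \<Longrightarrow> y \<in> B \<Longrightarrow> y \<in> fd_closure \<Sigma> X"

definition fd_entails :: "'v fd set \<Rightarrow> 'v set \<Rightarrow> 'v set \<Rightarrow> bool" where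
  "fd_entails \<Sigma> X Y \<longleftrightarrow> Y \<subseteq> fd_closure \<Sigma> X"

definition plusq :: "('r, 'v, 'c) atom set \<Rightarrow> ('r, 'v, 'c) atom \<Rightarrow> 'v set" where
  "plusq q F = {x. fd_entails (K (q - {F}) \<union> K (qc q)) (key F) {x}}"

definition attacks :: "('r, 'v, 'c) atom set \<Rightarrow> ('r, 'v, 'c) atom \<Rightarrow> ('r, 'v, 'c) atom \<Rightarrow> bool" where
  "attacks q F G \<longleftrightarrow> F \<in> q \<and> G \<in> q \<and> F \<noteq> G \<and>
     (\<exists>fs. length fs \<ge> 2 \<and> hd fs = F \<and> last fs = G \<and> set fs \<subseteq> q \<and>
        (\<forall>i. i + 1 < length fs \<longrightarrow>
           (vars (fs ! i) \<inter> vars (fs ! (i + 1))) - plusq q F \<noteq> {}))"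

definition strong_attack :: "('r, 'v, 'c) atom set \<Rightarrow> ('r, 'v, 'c) atom \<Rightarrow> ('r, 'v, 'c) atom \<Rightarrow> bool" where
  "strong_attack q F G \<longleftrightarrow> attacks q F G \<and> \<not> fd_entails (K q) (key F) (key G)"

definition is_cycle :: "('a \<Rightarrow> 'a \<Rightarrow> bool) \<Rightarrow> 'a list \<Rightarrow> bool" where
  "is_cycle E cs \<longleftrightarrow> length cs \<ge> 2 \<and> distinct cs \<and>
     (\<forall>i < length cs. E (cs ! i) (cs ! ((i + 1) mod length cs)))"

definition has_strong_cycle :: "('r, 'v, 'c) atom set \<Rightarrow> bool" where
  "has_strong_cycle q \<longleftrightarrow> (\<exists>cs. is_cycle (attacks q) cs \<and>
     (\<exists>i < length cs. strong_attack q (cs ! i) (cs ! ((i + 1) mod length cs))))"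

definition strong_component :: "('r, 'v, 'c) atom set \<Rightarrow> ('r, 'v, 'c) atom set \<Rightarrow> bool" where
  "strong_component q S \<longleftrightarrow> S \<subseteq> q \<and> S \<noteq> {} \<and>
     (\<forall>F\<in>S. \<forall>G\<in>S. (attacks q)\<^sup>*\<^sup>* F G) \<and>
     (\<forall>F\<in>S. \<forall>G\<in>q. (attacks q)\<^sup>*\<^sup>* F G \<and> (attacks q)\<^sup>*\<^sup>* G F \<longrightarrow> G \<in> S)"

definition initial_component :: "('r, 'v, 'c) atom set \<Rightarrow> ('r, 'v, 'c) atom set \<Rightarrow> bool" where
  "initial_component q S \<longleftrightarrow> strong_component q S \<and>
     (\<forall>F G. attacks q F G \<and> G \<in> S \<longrightarrow> F \<in> S)"

text \<open>The fresh atom N(x): fresh relation name (not used in q), signature [1,1].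
  Its mode is irrelevant (its FD {x} \<rightarrow> {x} is trivial); we take c.\<close>
definition fresh_atom :: "('r::infinite, 'v, 'c) atom set \<Rightarrow> 'v \<Rightarrow> ('r, 'v, 'c) atom" where
  "fresh_atom q x = Atom (SOME R. R \<notin> rel ` q) 1 [Var x] ModeC"

definition attacks_var :: "('r::infinite, 'v, 'c) atom set \<Rightarrow> ('r, 'v, 'c) atom \<Rightarrow> 'v \<Rightarrow> bool" where
  "attacks_var q F x \<longleftrightarrow> attacks (insert (fresh_atom q x) q) F (fresh_atom q x)"

definition seq_proof :: "('r, 'v, 'c) atom set \<Rightarrow> 'v set \<Rightarrow> 'v \<Rightarrow> ('r, 'v, 'c) atom list \<Rightarrow> bool" where
  "seq_proof q Z w fs \<longleftrightarrow> set fs \<subseteq> q \<and>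
     (\<forall>i < length fs. key (fs ! i) \<subseteq> Z \<union> (\<Union>j<i. vars (fs ! j))) \<and>
     (\<exists>k < length fs. w \<in> vars (fs ! k))"

definition internal :: "('r::infinite, 'v, 'c) atom set \<Rightarrow> 'v set \<Rightarrow> 'v \<Rightarrow> bool" where
  "internal q Z w \<longleftrightarrow>
     (\<exists>fs. seq_proof q Z w fs \<and> (\<forall>F\<in>set fs. \<forall>y \<in> Z \<union> {w}. \<not> attacks_var q F y)) \<and>
     (\<exists>F\<in>q. Z \<subseteq> vars F)"

definition saturated :: "('r::infinite, 'v, 'c) atom set \<Rightarrow> bool" where
  "saturated q \<longleftrightarrow> (\<forall>Z w. internal q Z w \<longrightarrow> fd_entails (K (qc q)) Z {w})"

definition medge :: "('r, 'v, 'c) atom set \<Rightarrow> ('r, 'v, 'c) atom \<Rightarrow> ('r, 'v, 'c) atom \<Rightarrow> bool" where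
  "medge q F G \<longleftrightarrow> F \<in> q \<and> G \<in> q \<and> F \<noteq> G \<and> fd_entails (K (qc q)) (vars F) (key G)"

end

theory Submission
  imports Defs
begin

lemma fd_closure_mono:
  assumes "x \<in> fd_closure \<Sigma> X" "\<Sigma> \<subseteq> \<Sigma>'"
  shows "x \<in> fd_closure \<Sigma>' X"
  using assms
proof (induction rule: fd_closure.induct)
  case (base x) thus ?case by (blast intro: fd_closure.base)
next
  case (step A B y) thus ?case by (meson fd_closure.step subsetD)
qed

lemma K_mem: "(A, B) \<in> K p \<longleftrightarrow> (\<exists>H\<in>p. A = key H \<and> B = vars H)"
  by (auto simp: K_def)

lemma key_sub_vars: "key F \<subseteq> vars F"
  unfolding key_def vars_def by (auto dest: in_set_takeD)

lemma finite_key: "finite (key F)"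
proof -
  have "key F = Var -` set (take (keylen F) (args F))" by (auto simp: key_def)
  thus ?thesis by (simp add: finite_vimageI inj_on_def)
qed

lemma plusq_mono: "q \<subseteq> q' \<Longrightarrow> plusq q H \<subseteq> plusq q' H"
proof
  fix x assume qq: "q \<subseteq> q'" and x: "x \<in> plusq q H"
  have sub: "K (q - {H}) \<union> K (qc q) \<subseteq> K (q' - {H}) \<union> K (qc q')"
    using qq by (auto simp: K_def qc_def)
  show "x \<in> plusq q' H" using x fd_closure_mono[OF _ sub]
    by (auto simp: plusq_def fd_entails_def)
qed

lemma fresh_notin:
  fixes q :: "('r::infinite, 'v, 'c) atom set"
  assumes "finite q" shows "fresh_atom q y \<notin> q"
proof
  have "\<exists>R. R \<notin> rel ` q"
    using ex_new_if_finite[OF infinite_UNIV] finite_imageI[OF assms] by blast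
  hence n: "(SOME R. R \<notin> rel ` q) \<notin> rel ` q" by (rule someI_ex)
  assume "fresh_atom q y \<in> q"
  hence "rel (fresh_atom q y) \<in> rel ` q" by blast
  thus False using n by (simp add: fresh_atom_def)
qed

lemma vars_fresh: "vars (fresh_atom q y) = {y}"
  by (simp add: fresh_atom_def vars_def)

lemma attacks_var_imp:
  fixes q :: "('r::infinite, 'v, 'c) atom set"
  assumes fin: "finite q" and av: "attacks_var q H y" and yX: "y \<in> vars X"
    and X: "X \<in> q" and HX: "H \<noteq> X"
  shows "attacks q H X"
proof -
  define N where "N = fresh_atom q y"
  define q' where "q' = insert N q"
  have Nq: "N \<notin> q" using fresh_notin[OF fin] by (simp add: N_def)
  have vN: "vars N = {y}" by (simp add: N_def vars_fresh)
  from av have a: "attacks q' H N" by (simp add: attacks_var_def N_def q'_def)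
  then have Hq': "H \<in> q'" and HN: "H \<noteq> N" by (auto simp: attacks_def)
  hence Hq: "H \<in> q" by (simp add: q'_def)
  from a obtain fs where len: "length fs \<ge> 2" and hd: "hd fs = H" and lst: "last fs = N"
    and sfs: "set fs \<subseteq> q'"
    and ed: "\<And>i. i + 1 < length fs \<Longrightarrow> (vars (fs ! i) \<inter> vars (fs ! (i + 1))) - plusq q' H \<noteq> {}"
    by (auto simp: attacks_def)
  have pm: "plusq q H \<subseteq> plusq q' H" by (rule plusq_mono) (auto simp: q'_def)
  define j where "j = length (takeWhile (\<lambda>A. A \<noteq> N) fs)"
  have ne: "fs \<noteq> []" using len by auto
  have "N \<in> set fs" using lst ne last_in_set by fastforce
  hence jl: "j < length fs"
  proof -
    assume Nin: "N \<in> set fs"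
    show ?thesis
    proof (rule ccontr)
      assume "\<not> j < length fs"
      hence "j = length fs" using length_takeWhile_le[of "\<lambda>A. A \<noteq> N" fs] unfolding j_def by linarith
      hence "takeWhile (\<lambda>A. A \<noteq> N) fs = fs" using takeWhile_eq_take[of "\<lambda>A. A \<noteq> N" fs]
        by (simp add: j_def)
      hence "\<forall>A\<in>set fs. A \<noteq> N" by (metis (mono_tags) set_takeWhileD)
      thus False using Nin by auto
    qed
  qed
  have fj: "fs ! j = N" using nth_length_takeWhile[OF jl[unfolded j_def]] by (simp add: j_def)
  have f0: "fs ! 0 = H" using hd ne by (simp add: hd_conv_nth)
  have j0: "j \<noteq> 0" proof assume "j = 0" thus False using fj f0 HN by simp qed
  have fiN: "fs ! i \<noteq> N" if "i < j" for i
  proof -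
    have "takeWhile (\<lambda>A. A \<noteq> N) fs ! i = fs ! i" using that by (simp add: j_def takeWhile_nth)
    moreover have "takeWhile (\<lambda>A. A \<noteq> N) fs ! i \<in> set (takeWhile (\<lambda>A. A \<noteq> N) fs)"
      using that by (simp add: j_def)
    ultimately show ?thesis by (metis (mono_tags) set_takeWhileD)
  qed
  define gs where "gs = take j fs @ [X]"
  have lg: "length gs = j + 1" using jl by (simp add: gs_def)
  have gi: "gs ! i = fs ! i" if "i < j" for i using that jl by (simp add: gs_def nth_append)
  have gj: "gs ! j = X" using jl by (simp add: gs_def nth_append)
  show ?thesis unfolding attacks_def
  proof (intro conjI exI[of _ gs])
    show "H \<in> q" "X \<in> q" "H \<noteq> X" by fact+
    show "2 \<le> length gs" using lg j0 by simp
    have "gs \<noteq> []" by (simp add: gs_def)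
    hence "hd gs = gs ! 0" by (simp add: hd_conv_nth)
    thus "hd gs = H" using gi[of 0] j0 f0 by simp
    show "last gs = X" by (simp add: gs_def)
    show "set gs \<subseteq> q"
    proof
      fix A assume "A \<in> set gs"
      then obtain i where i: "i < length gs" "gs ! i = A" by (auto simp: in_set_conv_nth)
      show "A \<in> q"
      proof (cases "i < j")
        case True
        hence "fs ! i \<in> q'" using jl sfs by auto
        thus ?thesis using fiN[OF True] gi[OF True] i by (auto simp: q'_def)
      next
        case False
        hence "i = j" using i lg by simp
        thus ?thesis using gj i X by simp
      qed
    qed
    show "\<forall>i. i + 1 < length gs \<longrightarrow> vars (gs ! i) \<inter> vars (gs ! (i + 1)) - plusq q H \<noteq> {}"
    proof (intro allI impI)
      fix i assume i: "i + 1 < length gs"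
      show "vars (gs ! i) \<inter> vars (gs ! (i + 1)) - plusq q H \<noteq> {}"
      proof (cases "i + 1 < j")
        case True
        thus ?thesis using ed[of i] jl gi[of i] gi[of "i+1"] pm by auto
      next
        case False
        hence ij: "i + 1 = j" using i lg by simp
        have "vars (fs ! i) \<inter> vars (fs ! (i + 1)) - plusq q' H \<noteq> {}" using ed[of i] ij jl by simp
        hence "y \<in> vars (fs ! i)" "y \<notin> plusq q' H" using ij fj vN by auto
        thus ?thesis using yX gi[of i] ij gj pm by auto
      qed
    qed
  qed
qed

lemma distinct_path:
  assumes "r\<^sup>*\<^sup>* a b"
  shows "\<exists>xs. xs \<noteq> [] \<and> hd xs = a \<and> last xs = b \<and> distinct xs \<and>
            (\<forall>i. Suc i < length xs \<longrightarrow> r (xs ! i) (xs ! Suc i))"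
  using assms
proof (induction rule: rtranclp_induct)
  case base
  show ?case by (intro exI[of _ "[a]"]) simp
next
  case (step b c)
  then obtain xs where ne: "xs \<noteq> []" and h: "hd xs = a" and l: "last xs = b" and d: "distinct xs"
    and e: "\<forall>i. Suc i < length xs \<longrightarrow> r (xs ! i) (xs ! Suc i)" by blast
  show ?case
  proof (cases "c \<in> set xs")
    case True
    then obtain k where k: "k < length xs" "xs ! k = c" by (auto simp: in_set_conv_nth)
    define ys where "ys = take (Suc k) xs"
    have "ys \<noteq> []" using ne by (simp add: ys_def)
    moreover have "hd ys = a" using ne h by (simp add: ys_def hd_conv_nth)
    moreover have "last ys = c" using k by (simp add: ys_def take_Suc_conv_app_nth)
    moreover have "distinct ys" using d by (simp add: ys_def)
    moreover have "\<forall>i. Suc i < length ys \<longrightarrow> r (ys ! i) (ys ! Suc i)" using e k by (simp add: ys_def)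
    ultimately show ?thesis by blast
  next
    case False
    define ys where "ys = xs @ [c]"
    have "ys \<noteq> []" by (simp add: ys_def)
    moreover have "hd ys = a" using ne h by (simp add: ys_def)
    moreover have "last ys = c" by (simp add: ys_def)
    moreover have "distinct ys" using d False by (simp add: ys_def)
    moreover have "\<forall>i. Suc i < length ys \<longrightarrow> r (ys ! i) (ys ! Suc i)"
    proof (intro allI impI)
      fix i assume i: "Suc i < length ys"
      show "r (ys ! i) (ys ! Suc i)"
      proof (cases "Suc i < length xs")
        case True thus ?thesis using e by (simp add: ys_def nth_append)
      next
        case False
        hence "Suc i = length xs" using i by (simp add: ys_def)
        moreover have "xs ! i = b" using l ne \<open>Suc i = length xs\<close> last_conv_nth[of xs] diff_Suc_1 by metis
        ultimately show ?thesis using step.hyps(2) by (simp add: ys_def nth_append)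
      qed
    qed
    ultimately show ?thesis by blast
  qed
qed

lemma cycle_of_edge:
  assumes ab: "r a b" and ba: "r\<^sup>*\<^sup>* b a" and neq: "a \<noteq> b"
  shows "\<exists>cs. is_cycle r cs \<and> cs ! 0 = a \<and> cs ! (1 mod length cs) = b"
proof -
  obtain xs where ne: "xs \<noteq> []" and h: "hd xs = b" and l: "last xs = a" and d: "distinct xs"
    and e: "\<forall>i. Suc i < length xs \<longrightarrow> r (xs ! i) (xs ! Suc i)"
    using distinct_path[OF ba] by blast
  have lx: "length xs \<ge> 2"
  proof (rule ccontr)
    assume "\<not> length xs \<ge> 2"
    moreover have "0 < length xs" using ne by simp
    ultimately have "length xs = 1" by linarith
    hence "hd xs = last xs" by (cases xs) auto
    thus False using h l neq by simp
  qed
  have xs_eq: "xs = butlast xs @ [a]" using ne l by (metis append_butlast_last_id)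
  have anb: "a \<notin> set (butlast xs)" using d xs_eq by (metis distinct_append disjoint_iff list.set_intros(1))
  define cs where "cs = a # butlast xs"
  have lc: "length cs = length xs" using ne by (simp add: cs_def)
  have c0: "cs ! 0 = a" by (simp add: cs_def)
  have cs_i: "cs ! Suc i = xs ! i" if "Suc i < length xs" for i
    using that by (simp add: cs_def nth_butlast)
  have x0: "xs ! 0 = b" using h ne by (simp add: hd_conv_nth)
  have xl: "xs ! (length xs - 1) = a" using l ne by (simp add: last_conv_nth)
  have "is_cycle r cs" unfolding is_cycle_def
  proof (intro conjI allI impI)
    show "2 \<le> length cs" using lx lc by simp
    show "distinct cs" using anb d by (simp add: cs_def distinct_butlast)
    fix i assume i: "i < length cs"
    show "r (cs ! i) (cs ! ((i + 1) mod length cs))"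
    proof (cases i)
      case 0
      have "cs ! 1 = b" using cs_i[of 0] lx x0 by simp
      thus ?thesis using 0 c0 ab lx lc by simp
    next
      case (Suc m)
      show ?thesis
      proof (cases "Suc i < length cs")
        case True
        hence "(i + 1) mod length cs = Suc (Suc m)" using Suc by simp
        thus ?thesis using e[rule_format, of m] cs_i[of m] cs_i[of "Suc m"] True Suc lc by simp
      next
        case False
        hence ii: "Suc i = length xs" using i lc by simp
        hence "(i + 1) mod length cs = 0" using lc by simp
        moreover have "r (xs ! m) (xs ! Suc m)" using e ii Suc by simp
        moreover have "xs ! Suc m = a" using xl ii Suc diff_Suc_1 by metis
        ultimately show ?thesis using cs_i[of m] ii Suc c0 by simp
      qed
    qed
  qed
  moreover have "cs ! (1 mod length cs) = b" using lx lc cs_i[of 0] x0 by simp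
  ultimately show ?thesis using c0 by blast
qed

definition seqp :: "('r, 'v, 'c) atom set \<Rightarrow> 'v set \<Rightarrow> ('r, 'v, 'c) atom list \<Rightarrow> bool" where
  "seqp p Z fs \<longleftrightarrow> set fs \<subseteq> p \<and> (\<forall>i < length fs. key (fs ! i) \<subseteq> Z \<union> (\<Union>j<i. vars (fs ! j)))"

definition cover :: "'v set \<Rightarrow> ('r, 'v, 'c) atom list \<Rightarrow> 'v set" where
  "cover Z fs = Z \<union> \<Union> (vars ` set fs)"

lemma seqp_append:
  assumes a: "seqp p Z xs" and b: "seqp p Z ys"
  shows "seqp p Z (xs @ ys)"
  unfolding seqp_def
proof (intro conjI allI impI)
  show "set (xs @ ys) \<subseteq> p" using a b by (simp add: seqp_def)
  fix i assume i: "i < length (xs @ ys)"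
  show "key ((xs @ ys) ! i) \<subseteq> Z \<union> (\<Union>j<i. vars ((xs @ ys) ! j))"
  proof (cases "i < length xs")
    case True
    have "(\<Union>j<i. vars ((xs @ ys) ! j)) = (\<Union>j<i. vars (xs ! j))"
      using True by (intro SUP_cong) (auto simp: nth_append)
    thus ?thesis using a True by (simp add: seqp_def nth_append)
  next
    case False
    define k where "k = i - length xs"
    have k: "k < length ys" "i = length xs + k" using i False by (auto simp: k_def)
    have "key (ys ! k) \<subseteq> Z \<union> (\<Union>j<k. vars (ys ! j))" using b k by (simp add: seqp_def)
    moreover have "(\<Union>j<k. vars (ys ! j)) \<subseteq> (\<Union>j<i. vars ((xs @ ys) ! j))"
    proof
      fix x assume "x \<in> (\<Union>j<k. vars (ys ! j))"
      then obtain j where "j < k" "x \<in> vars (ys ! j)" by auto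
      hence "length xs + j < i" "x \<in> vars ((xs @ ys) ! (length xs + j))" using k by (auto simp: nth_append)
      thus "x \<in> (\<Union>j<i. vars ((xs @ ys) ! j))" by blast
    qed
    ultimately show ?thesis using k by (auto simp: nth_append)
  qed
qed

lemma seqp_snoc:
  assumes a: "seqp p Z xs" and H: "H \<in> p" and kH: "key H \<subseteq> cover Z xs"
  shows "seqp p Z (xs @ [H])"
  unfolding seqp_def
proof (intro conjI allI impI)
  show "set (xs @ [H]) \<subseteq> p" using a H by (simp add: seqp_def)
  fix i assume i: "i < length (xs @ [H])"
  show "key ((xs @ [H]) ! i) \<subseteq> Z \<union> (\<Union>j<i. vars ((xs @ [H]) ! j))"
  proof (cases "i < length xs")
    case True
    have "(\<Union>j<i. vars ((xs @ [H]) ! j)) = (\<Union>j<i. vars (xs ! j))"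
      using True by (intro SUP_cong) (auto simp: nth_append)
    thus ?thesis using a True by (simp add: seqp_def nth_append)
  next
    case False
    hence ii: "i = length xs" using i by simp
    have "cover Z xs \<subseteq> Z \<union> (\<Union>j<i. vars ((xs @ [H]) ! j))"
    proof
      fix x assume "x \<in> cover Z xs"
      then consider "x \<in> Z" | A where "A \<in> set xs" "x \<in> vars A" by (auto simp: cover_def)
      thus "x \<in> Z \<union> (\<Union>j<i. vars ((xs @ [H]) ! j))"
      proof cases
        case 1 thus ?thesis by simp
      next
        case 2
        then obtain j where "j < length xs" "xs ! j = A" by (auto simp: in_set_conv_nth)
        thus ?thesis using 2 ii by (auto simp: nth_append)
      qed
    qed
    thus ?thesis using kH ii by (simp add: nth_append)
  qed
qed

lemma seqp_finite:
  assumes "finite A" "\<forall>a\<in>A. \<exists>fs. seqp p Z fs \<and> a \<in> cover Z fs"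
  shows "\<exists>fs. seqp p Z fs \<and> A \<subseteq> cover Z fs"
  using assms
proof (induction rule: finite_induct)
  case empty
  show ?case by (intro exI[of _ "[]"]) (simp add: seqp_def)
next
  case (insert a A)
  then obtain fs1 where f1: "seqp p Z fs1" "A \<subseteq> cover Z fs1" by blast
  from insert obtain fs2 where f2: "seqp p Z fs2" "a \<in> cover Z fs2" by blast
  have "seqp p Z (fs1 @ fs2)" using seqp_append f1 f2 by blast
  moreover have "insert a A \<subseteq> cover Z (fs1 @ fs2)" using f1 f2 by (auto simp: cover_def)
  ultimately show ?case by blast
qed

lemma closure_seq:
  assumes "w \<in> fd_closure (K p) Z"
  shows "\<exists>fs. seqp p Z fs \<and> w \<in> cover Z fs"
  using assms
proof (induction rule: fd_closure.induct)
  case (base x)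
  show ?case by (intro exI[of _ "[]"]) (simp add: seqp_def cover_def base)
next
  case (step A B y)
  then obtain H where H: "H \<in> p" "A = key H" "B = vars H" by (auto simp: K_mem)
  have "\<exists>fs. seqp p Z fs \<and> key H \<subseteq> cover Z fs"
    using step.IH H by (intro seqp_finite finite_key) auto
  then obtain fs where fs: "seqp p Z fs" "key H \<subseteq> cover Z fs" by blast
  have "seqp p Z (fs @ [H])" by (rule seqp_snoc[OF fs(1) H(1) fs(2)])
  moreover have "y \<in> cover Z (fs @ [H])" using \<open>y \<in> B\<close> H by (simp add: cover_def)
  ultimately show ?case by blast
qed

lemma succ_cycle:
  assumes fin: "finite S" and ne: "S \<noteq> {}" and succ: "\<forall>x\<in>S. \<exists>y\<in>S. y \<noteq> x \<and> E x y"
  shows "\<exists>cs. set cs \<subseteq> S \<and> is_cycle E cs"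
proof -
  obtain f where f: "\<And>x. x \<in> S \<Longrightarrow> f x \<in> S \<and> f x \<noteq> x \<and> E x (f x)" using succ by metis
  obtain x0 where x0: "x0 \<in> S" using ne by blast
  define s where "s n = (f ^^ n) x0" for n
  have sS: "s n \<in> S" for n by (induction n) (auto simp: s_def x0 f)
  have sSuc: "s (Suc n) = f (s n)" for n by (simp add: s_def)
  have ex: "\<exists>j. \<not> inj_on s {0..j}"
  proof
    show "\<not> inj_on s {0..card S}"
    proof
      assume inj: "inj_on s {0..card S}"
      have "card (s ` {0..card S}) = card S + 1" using card_image[OF inj] by simp
      moreover have "card (s ` {0..card S}) \<le> card S" using sS fin by (intro card_mono) auto
      ultimately show False by simp
    qed
  qed
  define j where "j = (LEAST j. \<not> inj_on s {0..j})"
  have nj: "\<not> inj_on s {0..j}" unfolding j_def using ex by (rule LeastI_ex)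
  have ij: "inj_on s {0..<j}"
  proof (cases j)
    case 0 thus ?thesis by simp
  next
    case (Suc m)
    have "m < j" using Suc by simp
    hence "inj_on s {0..m}" unfolding j_def using not_less_Least by blast
    moreover have "{0..<j} = {0..m}" using Suc by auto
    ultimately show ?thesis by simp
  qed
  obtain i where i: "i < j" "s i = s j"
  proof -
    from nj obtain a b where ab: "a \<in> {0..j}" "b \<in> {0..j}" "a \<noteq> b" "s a = s b"
      by (auto simp: inj_on_def)
    show ?thesis
    proof (cases "a = j")
      case True
      hence "b < j" using ab by auto
      thus ?thesis using ab True that[of b] by auto
    next
      case False
      show ?thesis
      proof (cases "b = j")
        case True
        hence "a < j" using ab by auto
        thus ?thesis using ab True that[of a] by auto
      next
        case False
        hence "a \<in> {0..<j}" "b \<in> {0..<j}" using ab \<open>a \<noteq> j\<close> by auto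
        thus ?thesis using ij ab by (auto simp: inj_on_def)
      qed
    qed
  qed
  have ji: "j \<noteq> Suc i"
  proof
    assume "j = Suc i"
    hence "s j = f (s i)" by (simp add: sSuc)
    thus False using i f[OF sS[of i]] by simp
  qed
  define cs where "cs = map s [i..<j]"
  have lc: "length cs = j - i" by (simp add: cs_def)
  have csk: "cs ! k = s (i + k)" if "k < j - i" for k using that by (simp add: cs_def)
  have "is_cycle E cs" unfolding is_cycle_def
  proof (intro conjI allI impI)
    show "2 \<le> length cs" using lc i ji by simp
    have "inj_on s (set [i..<j])" using ij by (rule inj_on_subset) auto
    thus "distinct cs" by (simp add: cs_def distinct_map)
    fix k assume k: "k < length cs"
    show "E (cs ! k) (cs ! ((k + 1) mod length cs))"
    proof (cases "k + 1 < length cs")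
      case True
      thus ?thesis using csk[of k] csk[of "k+1"] lc sSuc[of "i+k"] f[OF sS[of "i+k"]] by simp
    next
      case False
      hence kk: "k + 1 = j - i" using k lc by simp
      hence "(k + 1) mod length cs = 0" using lc by simp
      moreover have "cs ! 0 = s j" using csk[of 0] i by simp
      moreover have "s j = f (s (i + k))" using kk sSuc[of "i+k"] i
        by (metis Suc_eq_plus1 add_Suc_right le_add_diff_inverse less_imp_le)
      ultimately show ?thesis using csk[of k] k lc f[OF sS[of "i+k"]] by simp
    qed
  qed
  moreover have "set cs \<subseteq> S" using sS by (auto simp: cs_def)
  ultimately show ?thesis by blast
qed

lemma closure_key_sub:
  assumes "z \<in> fd_closure (K q) (key F)"
    and nc: "\<And>H. H \<in> S \<Longrightarrow> H \<noteq> F \<Longrightarrow> \<not> key H \<subseteq> fd_closure (K (q - S)) (vars F)"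
  shows "z \<in> fd_closure (K (q - S)) (vars F)"
  using assms(1)
proof (induction rule: fd_closure.induct)
  case (base x)
  hence "x \<in> vars F" by (rule subsetD[OF key_sub_vars])
  thus ?case by (rule fd_closure.base)
next
  case (step A B y)
  then obtain H where H: "H \<in> q" "A = key H" "B = vars H" by (auto simp: K_mem)
  have kH: "key H \<subseteq> fd_closure (K (q - S)) (vars F)" using step.IH H by auto
  show ?case
  proof (cases "H \<in> S")
    case True
    hence "H = F" using nc kH by blast
    thus ?thesis using \<open>y \<in> B\<close> H by (blast intro: fd_closure.base)
  next
    case False
    hence "(A, B) \<in> K (q - S)" using H by (auto simp: K_mem)
    thus ?thesis using kH H \<open>y \<in> B\<close> by (blast intro: fd_closure.step)
  qed
qed

theorem lemma11:
  fixes q S :: "('r::infinite, 'v, 'c) atom set"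
  assumes "sjf_query q"
    and "saturated q"
    and "\<not> has_strong_cycle q"
    and "initial_component q S"
    and "card S \<ge> 2"
  shows "\<exists>cs. set cs \<subseteq> S \<and> is_cycle (medge q) cs"
proof -
  have finq: "finite q" using assms(1) by (simp add: sjf_query_def)
  have Sq: "S \<subseteq> q" and Sne: "S \<noteq> {}"
    and Sconn: "\<And>F G. F \<in> S \<Longrightarrow> G \<in> S \<Longrightarrow> (attacks q)\<^sup>*\<^sup>* F G"
    and Smax: "\<And>F G. F \<in> S \<Longrightarrow> G \<in> q \<Longrightarrow> (attacks q)\<^sup>*\<^sup>* F G \<Longrightarrow> (attacks q)\<^sup>*\<^sup>* G F \<Longrightarrow> G \<in> S"
    and Sinit: "\<And>F G. attacks q F G \<Longrightarrow> G \<in> S \<Longrightarrow> F \<in> S"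
  proof -
    have ic: "strong_component q S" and ini: "\<forall>F G. attacks q F G \<and> G \<in> S \<longrightarrow> F \<in> S"
      using assms(4) unfolding initial_component_def by blast+
    have sc: "S \<subseteq> q \<and> S \<noteq> {} \<and>
     (\<forall>F\<in>S. \<forall>G\<in>S. (attacks q)\<^sup>*\<^sup>* F G) \<and>
     (\<forall>F\<in>S. \<forall>G\<in>q. (attacks q)\<^sup>*\<^sup>* F G \<and> (attacks q)\<^sup>*\<^sup>* G F \<longrightarrow> G \<in> S)"
      using ic unfolding strong_component_def .
    show "S \<subseteq> q" "S \<noteq> {}" using sc by blast+
    show "\<And>F G. F \<in> S \<Longrightarrow> G \<in> S \<Longrightarrow> (attacks q)\<^sup>*\<^sup>* F G" using sc by blast
    show "\<And>F G. F \<in> S \<Longrightarrow> G \<in> q \<Longrightarrow> (attacks q)\<^sup>*\<^sup>* F G \<Longrightarrow> (attacks q)\<^sup>*\<^sup>* G F \<Longrightarrow> G \<in> S"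
      using sc by blast
    show "\<And>F G. attacks q F G \<Longrightarrow> G \<in> S \<Longrightarrow> F \<in> S" using ini by blast
  qed
  have finS: "finite S" using finq Sq finite_subset by blast
  have succ: "\<forall>F\<in>S. \<exists>G\<in>S. G \<noteq> F \<and> medge q F G"
  proof
    fix F assume FS: "F \<in> S"
    have Fq: "F \<in> q" using FS Sq by blast
    obtain G0 where G0: "G0 \<in> S" "G0 \<noteq> F"
    proof -
      have "\<not> S \<subseteq> {F}"
      proof
        assume "S \<subseteq> {F}"
        hence "card S \<le> card {F}" by (intro card_mono) auto
        thus False using assms(5) by simp
      qed
      thus ?thesis using that by blast
    qed
    have "(attacks q)\<^sup>*\<^sup>* F G0" using Sconn FS G0 by blast
    then obtain G1 where a1: "attacks q F G1" and r1: "(attacks q)\<^sup>*\<^sup>* G1 G0"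
      using G0(2) by (metis converse_rtranclpE)
    have G1q: "G1 \<in> q" and G1F: "G1 \<noteq> F" using a1 by (auto simp: attacks_def)
    have r1F: "(attacks q)\<^sup>*\<^sup>* G1 F" using r1 Sconn[OF G0(1) FS] by simp
    have G1S: "G1 \<in> S" using Smax[OF FS G1q] a1 r1F by blast
    have weak: "fd_entails (K q) (key F) (key G1)"
    proof (rule ccontr)
      assume nw: "\<not> fd_entails (K q) (key F) (key G1)"
      obtain cs where cs: "is_cycle (attacks q) cs" "cs ! 0 = F" "cs ! (1 mod length cs) = G1"
        using cycle_of_edge[OF a1 r1F G1F[symmetric]] by blast
      have "0 < length cs" using cs(1) unfolding is_cycle_def by linarith
      have "strong_attack q (cs ! 0) (cs ! ((0 + 1) mod length cs))" using cs nw a1 by (simp add: strong_attack_def)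
      hence "has_strong_cycle q" unfolding has_strong_cycle_def using cs(1) \<open>0 < length cs\<close> by blast
      thus False using assms(3) by simp
    qed
    define C0 where "C0 = fd_closure (K (q - S)) (vars F)"
    have "\<exists>G\<in>S. G \<noteq> F \<and> key G \<subseteq> C0"
    proof (rule ccontr)
      assume nc: "\<not> (\<exists>G\<in>S. G \<noteq> F \<and> key G \<subseteq> C0)"
      have sub: "z \<in> C0" if "z \<in> fd_closure (K q) (key F)" for z
        using closure_key_sub[OF that, of S] nc unfolding C0_def by blast
      have "key G1 \<subseteq> C0" using weak sub by (auto simp: fd_entails_def)
      thus False using nc G1S G1F by blast
    qed
    then obtain G where G: "G \<in> S" "G \<noteq> F" "key G \<subseteq> C0" by blast
    have Gq: "G \<in> q" using G Sq by blast
    have "fd_entails (K (qc q)) (vars F) (key G)"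
      unfolding fd_entails_def
    proof
      fix w assume wG: "w \<in> key G"
      show "w \<in> fd_closure (K (qc q)) (vars F)"
      proof (cases "w \<in> vars F")
        case True thus ?thesis by (rule fd_closure.base)
      next
        case False
        have "w \<in> C0" using wG G by blast
        hence "w \<in> fd_closure (K (q - S)) (vars F)" by (simp add: C0_def)
        then obtain fs where fs: "seqp (q - S) (vars F) fs" "w \<in> cover (vars F) fs"
          using closure_seq by metis
        obtain H where H: "H \<in> set fs" "w \<in> vars H" using fs(2) False by (auto simp: cover_def)
        then obtain k where k: "k < length fs" "fs ! k = H" by (auto simp: in_set_conv_nth)
        have s1: "set fs \<subseteq> q" using fs(1) by (auto simp: seqp_def)
        have s2: "\<forall>i<length fs. key (fs ! i) \<subseteq> vars F \<union> (\<Union>j<i. vars (fs ! j))"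
          using fs(1) by (simp add: seqp_def)
        have sp: "seq_proof q (vars F) w fs"
          unfolding seq_proof_def using s1 s2 k H by blast
        have na: "\<forall>A\<in>set fs. \<forall>y \<in> vars F \<union> {w}. \<not> attacks_var q A y"
        proof (intro ballI notI)
          fix A y assume A: "A \<in> set fs" and y: "y \<in> vars F \<union> {w}" and av: "attacks_var q A y"
          have AqS: "A \<in> q" "A \<notin> S" using A fs(1) by (auto simp: seqp_def)
          obtain X where X: "X \<in> S" "y \<in> vars X"
          proof (cases "y \<in> vars F")
            case True thus ?thesis using that FS by blast
          next
            case False
            hence "y = w" using y by blast
            hence "y \<in> vars G" using subsetD[OF key_sub_vars wG] by simp
            thus ?thesis using that G(1) by blast
          qed
          have "A \<noteq> X" using AqS X by blast
          hence "attacks q A X" using attacks_var_imp[OF finq av X(2)] X Sq by blast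
          thus False using Sinit X AqS by blast
        qed
        have "internal q (vars F) w" unfolding internal_def using sp na Fq by blast
        hence "fd_entails (K (qc q)) (vars F) {w}" using assms(2) by (simp add: saturated_def)
        thus ?thesis by (simp add: fd_entails_def)
      qed
    qed
    hence "medge q F G" using Fq Gq G by (simp add: medge_def)
    thus "\<exists>G\<in>S. G \<noteq> F \<and> medge q F G" using G by blast
  qed
  show ?thesis using succ_cycle[OF finS Sne succ] .
qed

end
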